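(* For any $n,N\in\mathbb{N}$ and $a\in\mathbb{T}$, with $H_N=\sum_{k=1}^N1/k$, $$\frac{1}{2N+1}\sum_{w\in\mathbb{T}_N}\Big|\mathsf{Dir}_n\Big(\frac wa\Big)\Big|\le\frac{4n+2}{2N+1}+H_N,$$ $$\frac{1}{2N+1}\sum_{w\in\mathbb{T}_N}\Big|\mathsf{Fej}^+_{2n}\Big(\frac wa\Big)\Big|=\frac{1}{2N+1}\sum_{w\in\mathbb{T}_N}\Big|\mathsf{Fej}_n\Big(\frac wa\Big)\Big|\le\frac{2n+2}{2N+1}+\Big(\frac{2N+1}{2n+2}\Big)\frac{\pi^2}{6}.$$
   Context: $\mathbb{T}$ is the unit circle; $\mathbb{T}_N=\{\exp(i2\pi k/(2N+1)):k=-N,\dots,N\}$. Dirichlet kernel $\mathsf{Dir}_n(z)=\sum_{|k|\le n}z^k$; Fejér kernel $\mathsf{Fej}_n(z)=\sum_{|k|\le n}\big(1-\frac{|k|}{n+1}\big)z^k$; causal Fejér kernel $\mathsf{Fej}^+_{2n}(z)=z^n\mathsf{Fej}_n(z)$. *)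

theory Defs
  imports "HOL-Analysis.Analysis"
begin

definition circle :: "complex set" where
  "circle = {z. norm z = 1}"

definition circle_grid :: "nat \<Rightarrow> complex set" where
  "circle_grid N = (\<lambda>k::int. exp (\<i> * 2 * pi * of_int k / of_nat (2*N+1))) ` {-int N..int N}"

definition Dir :: "nat \<Rightarrow> complex \<Rightarrow> complex" where
  "Dir n z = (\<Sum>k\<in>{-int n..int n}. z powi k)"

definition Fej :: "nat \<Rightarrow> complex \<Rightarrow> complex" where
  "Fej n z = (\<Sum>k\<in>{-int n..int n}. complex_of_real (1 - real_of_int \<bar>k\<bar> / real (n+1)) * z powi k)"

definition Fej_plus :: "nat \<Rightarrow> complex \<Rightarrow> complex" where
  "Fej_plus n z = z ^ n * Fej n z"
  \<comment> \<open>Fej_plus n is the paper's causal Fejer kernel of index 2n.\<close>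

end

theory Submission
  imports Defs
begin

lemma split_int_sum:
  "(\<Sum>k\<in>{-int (Suc n)..int (Suc n)}. f k) = (\<Sum>k\<in>{-int n..int n}. f k) + f (int (Suc n)) + f (- int (Suc n))"
proof -
  have "{-int (Suc n)..int (Suc n)} = insert (int (Suc n)) (insert (- int (Suc n)) {-int n..int n})"
    by auto
  then show ?thesis by (simp add: algebra_simps)
qed

lemma powi_pm: "(z::complex) powi int (Suc n) = z ^ Suc n" "(z::complex) powi (- int (Suc n)) = inverse (z ^ Suc n)"
  by (simp_all only: power_int_minus power_int_of_nat)

lemma Dir_Suc: "Dir (Suc n) z = Dir n z + z ^ Suc n + inverse (z ^ Suc n)"
  unfolding Dir_def by (subst split_int_sum) (simp only: powi_pm)

lemma Dir_0: "Dir 0 z = 1" unfolding Dir_def by simp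

lemma Dir_mul: "z \<noteq> 0 \<Longrightarrow> (z - 1) * Dir n z = z ^ Suc n - inverse (z ^ n)"
proof (induction n)
  case 0 then show ?case by (simp add: Dir_0)
next
  case (Suc n)
  have "(z - 1) * Dir (Suc n) z = (z - 1) * Dir n z + (z - 1) * (z ^ Suc n + inverse (z ^ Suc n))"
    by (simp add: Dir_Suc algebra_simps)
  also have "\<dots> = z ^ Suc n - inverse (z ^ n) + (z - 1) * (z ^ Suc n + inverse (z ^ Suc n))"
    by (simp only: Suc.IH[OF Suc.prems])
  also have "\<dots> = z ^ Suc (Suc n) - inverse (z ^ Suc n)"
    using Suc.prems by (simp add: field_simps)
  finally show ?case .
qed

definition G :: "nat \<Rightarrow> complex \<Rightarrow> complex" where
  "G n z = (\<Sum>k\<in>{-int n..int n}. of_int (int n + 1 - \<bar>k\<bar>) * z powi k)"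

lemma G_Suc: "G (Suc n) z = G n z + Dir (Suc n) z"
proof -
  have "G (Suc n) z = (\<Sum>k\<in>{-int n..int n}. of_int (int n + 1 - \<bar>k\<bar>) * z powi k + z powi k)
        + z ^ Suc n + inverse (z ^ Suc n)"
    unfolding G_def by (subst split_int_sum, simp only: powi_pm) (simp add: algebra_simps)
  also have "\<dots> = G n z + Dir n z + z ^ Suc n + inverse (z ^ Suc n)"
    unfolding G_def Dir_def by (simp add: sum.distrib)
  finally show ?thesis by (simp add: Dir_Suc)
qed

lemma G_0: "G 0 z = 1" unfolding G_def by simp

lemma G_mul: "z \<noteq> 0 \<Longrightarrow> (z - 1)^2 * G n z = z ^ (n+2) - 2 * z + inverse (z ^ n)"
proof (induction n)
  case 0 then show ?case by (simp add: G_0 power2_eq_square algebra_simps)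
next
  case (Suc n)
  have "(z - 1)^2 * G (Suc n) z = (z - 1)^2 * G n z + (z - 1) * ((z - 1) * Dir (Suc n) z)"
    by (simp add: G_Suc power2_eq_square algebra_simps)
  also have "\<dots> = z ^ (n+2) - 2 * z + inverse (z ^ n) + (z - 1) * (z ^ Suc (Suc n) - inverse (z ^ Suc n))"
    by (simp only: Suc.IH[OF Suc.prems] Dir_mul[OF Suc.prems])
  also have "\<dots> = z ^ (Suc n+2) - 2 * z + inverse (z ^ Suc n)"
    using Suc.prems by (simp add: field_simps)
  finally show ?case .
qed

lemma Fej_G: "Fej n z = G n z / of_nat (n+1)"
  unfolding Fej_def G_def sum_divide_distrib
proof (rule sum.cong[OF refl])
  fix k assume "k \<in> {-int n..int n}"
  have "complex_of_real (1 - real_of_int \<bar>k\<bar> / real (n+1)) = complex_of_real (real_of_int (int n + 1 - \<bar>k\<bar>) / real (n+1))"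
    by (simp add: field_simps)
  also have "\<dots> = of_int (int n + 1 - \<bar>k\<bar>) / of_nat (n+1)"
    by (simp only: of_real_divide of_real_of_int_eq of_real_of_nat_eq)
  finally show "complex_of_real (1 - real_of_int \<bar>k\<bar> / real (n+1)) * z powi k = of_int (int n + 1 - \<bar>k\<bar>) * z powi k / of_nat (n+1)"
    by simp
qed

lemma norm_Dir_le: "norm z = 1 \<Longrightarrow> norm (Dir n z) \<le> 2 * n + 1"
proof (induction n)
  case 0 then show ?case by (simp add: Dir_0)
next
  case (Suc n)
  have "norm (Dir (Suc n) z) \<le> norm (Dir n z) + norm (z ^ Suc n) + norm (inverse (z ^ Suc n))"
    unfolding Dir_Suc using norm_triangle_ineq[of "Dir n z + z ^ Suc n" "inverse (z ^ Suc n)"]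
      norm_triangle_ineq[of "Dir n z" "z ^ Suc n"] by linarith
  also have "\<dots> \<le> 2 * n + 1 + 1 + 1" using Suc by (simp add: norm_power norm_inverse norm_mult)
  finally show ?case by simp
qed

lemma norm_G_le: "norm z = 1 \<Longrightarrow> norm (G n z) \<le> (n + 1)^2"
proof (induction n)
  case 0 then show ?case by (simp add: G_0)
next
  case (Suc n)
  have "norm (G (Suc n) z) \<le> norm (G n z) + norm (Dir (Suc n) z)"
    unfolding G_Suc by (rule norm_triangle_ineq)
  also have "\<dots> \<le> (n+1)^2 + (2 * Suc n + 1)" using Suc norm_Dir_le[OF Suc.prems, of "Suc n"] by linarith
  also have "\<dots> = (Suc n + 1)^2" by (simp add: power2_eq_square)
  finally show ?case by simp
qed

lemma norm_Dir_le2: "norm z = 1 \<Longrightarrow> norm (z - 1) * norm (Dir n z) \<le> 2"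
proof -
  assume z: "norm z = 1"
  hence "z \<noteq> 0" by auto
  have "norm (z - 1) * norm (Dir n z) = norm (z ^ Suc n - inverse (z ^ n))"
    using arg_cong[OF Dir_mul[OF \<open>z \<noteq> 0\<close>], of norm] by (simp only: norm_mult)
  also have "\<dots> \<le> norm (z ^ Suc n) + norm (inverse (z ^ n))" by (rule norm_triangle_ineq4)
  also have "\<dots> = 2" using z by (simp add: norm_power norm_inverse norm_mult)
  finally show ?thesis .
qed

lemma norm_G_le2: "norm z = 1 \<Longrightarrow> norm (z - 1)^2 * norm (G n z) \<le> 4"
proof -
  assume z: "norm z = 1"
  hence "z \<noteq> 0" by auto
  have "norm (z - 1)^2 * norm (G n z) = norm (z ^ (n+2) - 2 * z + inverse (z ^ n))"
    using arg_cong[OF G_mul[OF \<open>z \<noteq> 0\<close>], of norm] by (simp only: norm_mult norm_power)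
  also have "\<dots> \<le> norm (z ^ (n+2)) + norm (2 * z) + norm (inverse (z ^ n))"
    using norm_triangle_ineq4[of "z ^ (n+2)" "2 * z"] norm_triangle_ineq[of "z ^ (n+2) - 2 * z" "inverse (z ^ n)"]
    by linarith
  also have "\<dots> = 4" using z by (simp add: norm_power norm_inverse norm_mult)
  finally show ?thesis .
qed

lemma jordan:
  fixes x :: real assumes "0 \<le> x" "x \<le> pi/2"
  shows "2 * x / pi \<le> sin x"
proof -
  have cv: "convex_on {0..pi/2} (\<lambda>x. - sin x)"
  proof (rule convex_on_realI[where f' = "\<lambda>x. - cos x"])
    show "connected {0..pi/2}" by simp
    show "((\<lambda>x. - sin x) has_real_derivative - cos x) (at x)" for x
      by (auto intro!: derivative_eq_intros)
    show "- cos x \<le> - cos y" if "x \<in> {0..pi/2}" "y \<in> {0..pi/2}" "x \<le> y" for x y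
      using cos_monotone_0_pi_le[of x y] that by auto
  qed
  define t where "t = 2 * x / pi"
  have t: "0 \<le> t" "t \<le> 1" using assms pi_gt_zero unfolding t_def by (auto simp: field_simps)
  have "- sin ((1 - t) *\<^sub>R 0 + t *\<^sub>R (pi/2)) \<le> (1 - t) * (- sin 0) + t * (- sin (pi/2))"
    by (rule convex_onD[OF cv]) (use t in auto)
  moreover have "t *\<^sub>R (pi/2) = x" unfolding t_def by simp
  ultimately show ?thesis unfolding t_def by simp
qed

lemma norm_exp_minus_1:
  fixes th :: real assumes "\<bar>th\<bar> \<le> pi"
  shows "2 * \<bar>th\<bar> / pi \<le> norm (exp (\<i> * complex_of_real th) - 1)"
proof -
  have "exp (\<i> * complex_of_real th) = Complex (cos th) (sin th)"
    by (simp add: cis_conv_exp[symmetric] cis.ctr)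
  hence "norm (exp (\<i> * complex_of_real th) - 1) = sqrt ((cos th - 1)^2 + (sin th)^2)"
    by (simp add: cmod_def)
  also have "(cos th - 1)^2 + (sin th)^2 = (2 * \<bar>sin (th/2)\<bar>)^2"
  proof -
    have c: "cos th = 1 - 2 * sin (th/2) ^ 2" using cos_double_sin[of "th/2"] by simp
    have "(cos th - 1)^2 + (sin th)^2 = 2 - 2 * cos th"
      using sin_cos_squared_add[of th] by (simp add: power2_eq_square algebra_simps)
    also have "\<dots> = (2 * \<bar>sin (th/2)\<bar>)^2" by (simp add: c power_mult_distrib)
    finally show ?thesis .
  qed
  also have "sqrt ((2 * \<bar>sin (th/2)\<bar>)^2) = 2 * \<bar>sin (th/2)\<bar>" by (rule real_sqrt_unique) auto
  finally have eq: "norm (exp (\<i> * complex_of_real th) - 1) = 2 * \<bar>sin (th/2)\<bar>" .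
  have "2 * \<bar>th/2\<bar> / pi \<le> \<bar>sin (th/2)\<bar>"
  proof (cases "th \<ge> 0")
    case True
    then show ?thesis using jordan[of "th/2"] assms by auto
  next
    case False
    then show ?thesis using jordan[of "-th/2"] assms by auto
  qed
  then show ?thesis unfolding eq by simp
qed

lemma comb:
  fixes phi :: "int \<Rightarrow> real" and e :: "nat \<Rightarrow> real"
  assumes C: "0 \<le> C" and phiC: "\<And>k. phi k \<le> C"
    and neg: "\<And>k. k \<le> -1 \<Longrightarrow> phi k \<le> e (nat (-k))"
    and pos: "\<And>k. k \<ge> 2 \<Longrightarrow> phi k \<le> e (nat (k-1))"
  shows "(\<Sum>k\<in>{-int N..int N}. phi k) \<le> 2 * C + (\<Sum>j\<in>{1..N}. e j) + (\<Sum>j\<in>{1..N-1}. e j)"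
proof (induction N)
  case 0 then show ?case using C phiC[of 0] by simp
next
  case (Suc N)
  show ?case
  proof (cases "N = 0")
    case True
    have "phi 1 \<le> C" by (rule phiC)
    moreover have "phi (-1) \<le> e 1" using neg[of "-1"] by simp
    moreover have "phi 0 \<le> C" by (rule phiC)
    moreover have "(\<Sum>k\<in>{-int (Suc N)..int (Suc N)}. phi k) = phi 0 + phi 1 + phi (-1)"
      using split_int_sum[of phi 0] True by simp
    moreover have "(\<Sum>j\<in>{1..Suc N}. e j) + (\<Sum>j\<in>{1..Suc N - 1}. e j) = e 1" using True by simp
    ultimately show ?thesis by linarith
  next
    case False
    have a: "phi (int (Suc N)) \<le> e N" using pos[of "int (Suc N)"] False by simp
    have b0: "- int (Suc N) \<le> -1" by simp
    have b: "phi (- int (Suc N)) \<le> e (Suc N)" using neg[OF b0] by (simp only: minus_minus nat_int)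
    have s1: "(\<Sum>j\<in>{1..Suc N}. e j) = (\<Sum>j\<in>{1..N}. e j) + e (Suc N)" by simp
    have s2: "(\<Sum>j\<in>{1..Suc N - 1}. e j) = (\<Sum>j\<in>{1..N-1}. e j) + e N"
      using False by (cases N) auto
    show ?thesis unfolding split_int_sum s1 s2 using Suc.IH a b by linarith
  qed
qed

definition cg :: "nat \<Rightarrow> real \<Rightarrow> complex" where
  "cg N x = exp (\<i> * 2 * pi * complex_of_real x / of_nat (2*N+1))"

lemma grid_cg: "circle_grid N = (\<lambda>k. cg N (of_int k)) ` {-int N..int N}"
  unfolding circle_grid_def cg_def by simp

lemma cg_add: "cg N x * cg N y = cg N (x + y)"
  unfolding cg_def by (simp add: exp_add[symmetric] algebra_simps add_divide_distrib)

lemma cg_diff: "cg N x / cg N y = cg N (x - y)"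
  unfolding cg_def by (simp add: exp_diff[symmetric] algebra_simps diff_divide_distrib)

lemma cg_nz: "cg N x \<noteq> 0" unfolding cg_def by simp

lemma nzM: "(of_nat (2*N+1)::complex) \<noteq> 0"
  by (metis Suc_eq_plus1 of_nat_neq_0)

lemma helper1: "(c::complex) \<noteq> 0 \<Longrightarrow> \<i> * 2 * p * (c * q) / c = 2 * q * p * \<i>"
  by (simp add: field_simps)

lemma helper2: "(c::complex) \<noteq> 0 \<Longrightarrow> p \<noteq> 0 \<Longrightarrow> \<i> * 2 * p * (x * c / (2 * p)) / c = \<i> * x"
  by (simp add: field_simps)

lemma cg_period: "cg N (x + real (2*N+1) * of_int q) = cg N x"
proof -
  have "cg N (x + real (2*N+1) * of_int q) = cg N x * cg N (real (2*N+1) * of_int q)"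
    by (simp add: cg_add)
  also have "complex_of_real (real (2*N+1) * of_int q) = of_nat (2*N+1) * of_int q" by simp
  hence "cg N (real (2*N+1) * of_int q) = exp (\<i> * 2 * complex_of_real pi * (of_nat (2*N+1) * of_int q) / of_nat (2*N+1))"
    unfolding cg_def by (simp only:)
  also have "\<dots> = exp (2 * complex_of_int q * complex_of_real pi * \<i>)"
    by (simp only: helper1[OF nzM])
  also have "\<dots> = exp (complex_of_real (2 * real_of_int q * pi) * \<i>)" by simp
  also have "\<dots> = 1" by (rule exp_integer_2pi) simp
  finally show ?thesis by simp
qed

lemma grid_shift:
  "(\<lambda>w. w / cg N (of_int s)) ` circle_grid N = circle_grid N"
proof -
  let ?h = "\<lambda>w. w / cg N (of_int s)"
  let ?M = "int (2*N+1)"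
  have sub: "?h ` circle_grid N \<subseteq> circle_grid N"
  proof
    fix v assume "v \<in> ?h ` circle_grid N"
    then obtain k where k: "k \<in> {-int N..int N}" and v: "v = cg N (of_int k) / cg N (of_int s)"
      unfolding grid_cg by auto
    define r where "r = (k - s + int N) mod ?M - int N"
    define q where "q = (k - s + int N) div ?M"
    have e: "q * ?M + ((k - s + int N) mod ?M) = k - s + int N" unfolding q_def by (rule div_mult_mod_eq)
    have kr: "k - s = r + q * ?M" using e unfolding r_def by linarith
    have m1: "(k - s + int N) mod ?M < ?M" by (rule pos_mod_bound) simp
    have m2: "0 \<le> (k - s + int N) mod ?M" by (rule pos_mod_sign) simp
    have m3: "?M = 2 * int N + 1" by simp
    have r: "r \<in> {-int N..int N}" unfolding r_def atLeastAtMost_iff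
      using m1 m2 m3 by linarith
    have "v = cg N (of_int (k - s))" unfolding v cg_diff by simp
    also have "\<dots> = cg N (of_int r + real (2*N+1) * of_int q)" unfolding kr by (simp add: algebra_simps)
    also have "\<dots> = cg N (of_int r)" by (rule cg_period)
    finally show "v \<in> circle_grid N" unfolding grid_cg using r by auto
  qed
  have inj: "inj_on ?h (circle_grid N)"
    by (rule inj_onI) (simp add: cg_nz)
  have fin: "finite (circle_grid N)" unfolding grid_cg by simp
  show ?thesis
    by (rule card_subset_eq[OF fin sub]) (simp add: card_image[OF inj])
qed

lemma grid_reduce:
  fixes g :: "complex \<Rightarrow> real"
  assumes a: "norm a = 1" and g: "\<And>z. 0 \<le> g z"
  shows "\<exists>u. \<bar>u\<bar> \<le> 1/2 \<and> (\<Sum>w\<in>circle_grid N. g (w / a)) \<le> (\<Sum>k\<in>{-int N..int N}. g (cg N (of_int k - u)))"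
proof -
  define M where "M = real (2*N+1)"
  have M: "M > 0" unfolding M_def by simp
  define t where "t = Arg a * M / (2 * pi)"
  define s where "s = round t"
  define u where "u = t - of_int s"
  have u: "\<bar>u\<bar> \<le> 1/2" unfolding u_def s_def using of_int_round_abs_le[of t] by linarith
  have "a = rcis (cmod a) (Arg a)" by (simp add: rcis_cmod_Arg)
  also have "\<dots> = exp (\<i> * complex_of_real (Arg a))" using a by (simp add: rcis_def cis_conv_exp)
  also have "complex_of_real t = complex_of_real (Arg a) * of_nat (2*N+1) / (2 * complex_of_real pi)"
    unfolding t_def M_def by simp
  hence "cg N t = exp (\<i> * 2 * complex_of_real pi * (complex_of_real (Arg a) * of_nat (2*N+1) / (2 * complex_of_real pi)) / of_nat (2*N+1))"
    unfolding cg_def by (simp only:)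
  hence "cg N t = exp (\<i> * complex_of_real (Arg a))"
    by (simp only: helper2[OF nzM] of_real_eq_0_iff pi_neq_zero not_False_eq_True)
  hence "exp (\<i> * complex_of_real (Arg a)) = cg N t" ..
  also have "\<dots> = cg N (of_int s) * cg N u" unfolding cg_add u_def by simp
  finally have aeq: "a = cg N (of_int s) * cg N u" .
  let ?h = "\<lambda>w. w / cg N (of_int s)"
  have inj: "inj_on ?h (circle_grid N)"
    by (rule inj_onI) (simp add: cg_nz)
  have "(\<Sum>w\<in>circle_grid N. g (w / a)) = (\<Sum>w\<in>circle_grid N. g (?h w / cg N u))"
    unfolding aeq by (simp add: field_simps)
  also have "\<dots> = (\<Sum>v\<in>?h ` circle_grid N. g (v / cg N u))"
    by (subst sum.reindex[OF inj]) simp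
  also have "\<dots> = (\<Sum>v\<in>circle_grid N. g (v / cg N u))" unfolding grid_shift ..
  also have "\<dots> \<le> (\<Sum>k\<in>{-int N..int N}. g (cg N (of_int k) / cg N u))"
    unfolding grid_cg using sum_image_le[of "{-int N..int N}" "\<lambda>v. g (v / cg N u)" "\<lambda>k. cg N (of_int k)"]
    by (simp add: g o_def)
  also have "\<dots> = (\<Sum>k\<in>{-int N..int N}. g (cg N (of_int k - u)))" by (simp add: cg_diff)
  finally show ?thesis using u by blast
qed

lemma norm_cg: "norm (cg N x) = 1"
  unfolding cg_def by (simp add: norm_exp_eq_Re)

lemma cg_lower:
  assumes "\<bar>x\<bar> \<le> real N + 1/2"
  shows "4 * \<bar>x\<bar> / real (2*N+1) \<le> norm (cg N x - 1)"
proof -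
  define th where "th = 2 * pi * x / real (2*N+1)"
  have M: "real (2*N+1) > 0" by simp
  have "cg N x = exp (\<i> * complex_of_real th)"
    unfolding cg_def th_def by (simp add: field_simps)
  moreover have "\<bar>th\<bar> \<le> pi"
  proof -
    have "\<bar>th\<bar> = 2 * pi * \<bar>x\<bar> / real (2*N+1)" unfolding th_def by (simp add: abs_mult)
    also have "\<dots> \<le> 2 * pi * (real N + 1/2) / real (2*N+1)"
      by (intro divide_right_mono mult_left_mono assms) auto
    also have "\<dots> = pi" by (simp add: field_simps)
    finally show ?thesis .
  qed
  ultimately have "2 * \<bar>th\<bar> / pi \<le> norm (cg N x - 1)" using norm_exp_minus_1 by simp
  moreover have "2 * \<bar>th\<bar> / pi = 4 * \<bar>x\<bar> / real (2*N+1)"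
  proof -
    have h: "pi \<noteq> 0 \<Longrightarrow> (m::real) \<noteq> 0 \<Longrightarrow> 2 * (2 * pi * y / m) / pi = 4 * y / m" for m y
      by (simp add: field_simps)
    have "\<bar>th\<bar> = 2 * pi * \<bar>x\<bar> / real (2*N+1)" unfolding th_def by (simp add: abs_mult)
    then show ?thesis using h[of "real (2*N+1)" "\<bar>x\<bar>"] M by simp
  qed
  ultimately show ?thesis by simp
qed

lemma kbound: "\<bar>k\<bar> \<le> int N \<Longrightarrow> - real N \<le> real_of_int k \<and> real_of_int k \<le> real N"
proof -
  assume "\<bar>k\<bar> \<le> int N"
  hence "- int N \<le> k" "k \<le> int N" by auto
  hence "real_of_int (- int N) \<le> real_of_int k" "real_of_int k \<le> real_of_int (int N)"
    by (simp_all only: of_int_le_iff)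
  thus ?thesis by simp
qed

lemma sym_bound0:
  fixes psi :: "real \<Rightarrow> real" and C D u :: real and p :: nat
  assumes C: "0 \<le> C" and D: "0 \<le> D"
    and psiC: "\<And>x. \<bar>x\<bar> \<le> real N + 1/2 \<Longrightarrow> psi x \<le> C"
    and psiD: "\<And>x. x \<noteq> 0 \<Longrightarrow> \<bar>x\<bar> \<le> real N + 1/2 \<Longrightarrow> psi x \<le> D / \<bar>x\<bar>^p"
    and u: "0 \<le> u" "u \<le> 1/2"
  shows "(\<Sum>k\<in>{-int N..int N}. psi (of_int k - u))
         \<le> 2 * C + (\<Sum>j\<in>{1..N}. D / real j ^ p) + (\<Sum>j\<in>{1..N-1}. D / real j ^ p)"
proof -
  define phi where "phi k = (if \<bar>k\<bar> \<le> int N then psi (of_int k - u) else 0)" for k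
  have mono: "D / y ^ p \<le> D / real j ^ p" if "0 < real j" "real j \<le> y" for y j
    using that D by (intro divide_left_mono power_mono mult_pos_pos zero_less_power) auto
  have "(\<Sum>k\<in>{-int N..int N}. psi (of_int k - u)) = (\<Sum>k\<in>{-int N..int N}. phi k)"
    by (rule sum.cong) (auto simp: phi_def)
  also have "\<dots> \<le> 2 * C + (\<Sum>j\<in>{1..N}. D / real j ^ p) + (\<Sum>j\<in>{1..N-1}. D / real j ^ p)"
  proof (rule comb[OF C])
    fix k
    show "phi k \<le> C"
    proof (cases "\<bar>k\<bar> \<le> int N")
      case True
      have "\<bar>of_int k - u\<bar> \<le> real N + 1/2" using kbound[OF True] u by (simp add: abs_le_iff)
      then show ?thesis using psiC True by (simp add: phi_def)
    qed (use C in \<open>simp add: phi_def\<close>)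
  next
    fix k :: int assume k: "k \<le> -1"
    show "phi k \<le> D / real (nat (-k)) ^ p"
    proof (cases "\<bar>k\<bar> \<le> int N")
      case True
      have r: "real (nat (-k)) = - of_int k" using k by simp
      have b: "\<bar>of_int k - u\<bar> \<le> real N + 1/2" using kbound[OF True] u by (simp add: abs_le_iff)
      have "\<bar>of_int k - u\<bar> = u - of_int k" using k u by simp
      hence "psi (of_int k - u) \<le> D / \<bar>of_int k - u\<bar>^p" using psiD[OF _ b] k u by simp
      also have "\<dots> \<le> D / real (nat (-k)) ^ p"
        by (rule mono) (use k u r in auto)
      finally show ?thesis using True by (simp add: phi_def)
    qed (use D in \<open>simp add: phi_def\<close>)
  next
    fix k :: int assume k: "k \<ge> 2"
    show "phi k \<le> D / real (nat (k - 1)) ^ p"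
    proof (cases "\<bar>k\<bar> \<le> int N")
      case True
      have r: "real (nat (k - 1)) = of_int k - 1" using k by simp
      have b: "\<bar>of_int k - u\<bar> \<le> real N + 1/2" using kbound[OF True] u by (simp add: abs_le_iff)
      have "psi (of_int k - u) \<le> D / \<bar>of_int k - u\<bar>^p" using psiD[OF _ b] k u by simp
      also have "\<dots> \<le> D / real (nat (k - 1)) ^ p"
        by (rule mono) (use k u r in auto)
      finally show ?thesis using True by (simp add: phi_def)
    qed (use D in \<open>simp add: phi_def\<close>)
  qed
  finally show ?thesis .
qed

lemma sym_bound:
  fixes psi :: "real \<Rightarrow> real" and C D u :: real and p :: nat
  assumes C: "0 \<le> C" and D: "0 \<le> D"
    and psiC: "\<And>x. \<bar>x\<bar> \<le> real N + 1/2 \<Longrightarrow> psi x \<le> C"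
    and psiD: "\<And>x. x \<noteq> 0 \<Longrightarrow> \<bar>x\<bar> \<le> real N + 1/2 \<Longrightarrow> psi x \<le> D / \<bar>x\<bar>^p"
    and u: "\<bar>u\<bar> \<le> 1/2"
  shows "(\<Sum>k\<in>{-int N..int N}. psi (of_int k - u))
         \<le> 2 * C + (\<Sum>j\<in>{1..N}. D / real j ^ p) + (\<Sum>j\<in>{1..N-1}. D / real j ^ p)"
proof (cases "u \<ge> 0")
  case True
  then show ?thesis using sym_bound0[OF C D psiC psiD] u by auto
next
  case False
  have "(\<Sum>k\<in>{-int N..int N}. psi (of_int k - u)) = (\<Sum>k\<in>{-int N..int N}. psi (of_int (-k) - u))"
    by (rule sum.reindex_bij_witness[where i=uminus and j=uminus]) auto
  also have "\<dots> = (\<Sum>k\<in>{-int N..int N}. (\<lambda>x. psi (-x)) (of_int k - (-u)))" by simp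
  also have "\<dots> \<le> 2 * C + (\<Sum>j\<in>{1..N}. D / real j ^ p) + (\<Sum>j\<in>{1..N-1}. D / real j ^ p)"
  proof (rule sym_bound0[OF C D])
    show "psi (- x) \<le> C" if "\<bar>x\<bar> \<le> real N + 1/2" for x using psiC[of "-x"] that by simp
    show "psi (- x) \<le> D / \<bar>x\<bar>^p" if "x \<noteq> 0" "\<bar>x\<bar> \<le> real N + 1/2" for x
      using psiD[of "-x"] that by simp
  qed (use False u in auto)
  finally show ?thesis .
qed

lemma grid_norm: "w \<in> circle_grid N \<Longrightarrow> norm w = 1"
  unfolding grid_cg using norm_cg by auto

lemma inv_sq_bound: "(\<Sum>j\<in>{1..N}. 1 / real j ^ 2) \<le> pi^2 / 6"
proof -
  have "(\<Sum>j\<in>{1..N}. 1 / real j ^ 2) = (\<Sum>i<N. 1 / (1 + real i) ^ 2)"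
  proof -
    have "{1..N} = Suc ` {..<N}" by (simp add: atLeast1_atMost_eq_remove0 image_Suc_lessThan)
    then show ?thesis by (simp add: sum.reindex add.commute)
  qed
  also have s: "(\<lambda>i. 1 / (1 + real i) ^ 2) sums (pi^2/6)" using inverse_squares_sums by simp
  have "(\<Sum>i<N. 1 / (1 + real i) ^ 2) \<le> (\<Sum>i. 1 / (1 + real i) ^ 2)"
    by (rule sum_le_suminf) (use s sums_summable in auto)
  also have "\<dots> = pi^2 / 6" using s sums_unique by (metis (no_types))
  finally show ?thesis .
qed

lemma alg1: "(y::real) > 0 \<Longrightarrow> M > 0 \<Longrightarrow> c > 0 \<Longrightarrow> 4 / (4 * y / M)^2 / c = M^2 / (4 * c) / y^2"
  by (simp add: field_simps power2_eq_square)

lemma alg2: "(M::real) > 0 \<Longrightarrow> m > 0 \<Longrightarrow> (1/M) * (2 * m + 2 * (M^2 / (4 * m)) * P) = 2 * m / M + (M / (2 * m)) * P"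
  by (simp add: field_simps power2_eq_square)

lemma alg3: "(y::real) > 0 \<Longrightarrow> M > 0 \<Longrightarrow> 2 / (4 * y / M) = (M/2) / y ^ 1"
  by (simp add: field_simps)

lemma alg4: "(M::real) > 0 \<Longrightarrow> (1/M) * (c + M * h) = c / M + h"
  by (simp add: field_simps)

lemma part_dir:
  assumes a: "norm a = 1"
  shows "(1 / real (2*N+1)) * (\<Sum>w\<in>circle_grid N. norm (Dir n (w / a)))
           \<le> real (4*n+2) / real (2*N+1) + harm N"
proof -
  define M where "M = real (2*N+1)"
  have M: "M > 0" unfolding M_def by simp
  obtain u where u: "\<bar>u\<bar> \<le> 1/2" and le:
    "(\<Sum>w\<in>circle_grid N. norm (Dir n (w / a))) \<le> (\<Sum>k\<in>{-int N..int N}. norm (Dir n (cg N (of_int k - u))))"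
    using grid_reduce[OF a, of "\<lambda>z. norm (Dir n z)" N] by auto
  have sb: "(\<Sum>k\<in>{-int N..int N}. norm (Dir n (cg N (of_int k - u))))
      \<le> 2 * real (2*n+1) + (\<Sum>j\<in>{1..N}. (M/2) / real j ^ 1) + (\<Sum>j\<in>{1..N-1}. (M/2) / real j ^ 1)"
  proof (rule sym_bound[where psi = "\<lambda>x. norm (Dir n (cg N x))", OF _ _ _ _ u])
    show "norm (Dir n (cg N x)) \<le> real (2*n+1)" for x using norm_Dir_le[OF norm_cg] by simp
    show "norm (Dir n (cg N x)) \<le> (M/2) / \<bar>x\<bar> ^ 1" if x: "x \<noteq> 0" "\<bar>x\<bar> \<le> real N + 1/2" for x
    proof -
      have l: "4 * \<bar>x\<bar> / M \<le> norm (cg N x - 1)" using cg_lower[OF x(2)] unfolding M_def .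
      have p: "0 < 4 * \<bar>x\<bar> / M" using x M by simp
      have "4 * \<bar>x\<bar> / M * norm (Dir n (cg N x)) \<le> norm (cg N x - 1) * norm (Dir n (cg N x))"
        by (rule mult_right_mono[OF l]) simp
      also have "\<dots> \<le> 2" by (rule norm_Dir_le2[OF norm_cg])
      finally have "norm (Dir n (cg N x)) * (4 * \<bar>x\<bar> / M) \<le> 2" by (simp only: mult.commute)
      hence "norm (Dir n (cg N x)) \<le> 2 / (4 * \<bar>x\<bar> / M)" using pos_le_divide_eq[OF p] by blast
      also have "\<dots> = (M/2) / \<bar>x\<bar> ^ 1" by (rule alg3) (use x M in auto)
      finally show ?thesis .
    qed
  qed (use M in auto)
  have h: "(\<Sum>j\<in>{1..N}. (M/2) / real j ^ 1) = (M/2) * harm N"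
    unfolding harm_def sum_distrib_left by (rule sum.cong[OF refl]) (simp only: power_one_right divide_inverse)
  have h2: "(\<Sum>j\<in>{1..N-1}. (M/2) / real j ^ 1) \<le> (\<Sum>j\<in>{1..N}. (M/2) / real j ^ 1)"
    by (rule sum_mono2) (use M in auto)
  have "real (4*n+2) = 2 * real (2*n+1)" by simp
  have "(\<Sum>w\<in>circle_grid N. norm (Dir n (w / a))) \<le> real (4*n+2) + M * harm N"
    using le sb h h2 \<open>real (4*n+2) = 2 * real (2*n+1)\<close> by linarith
  then have "(1 / M) * (\<Sum>w\<in>circle_grid N. norm (Dir n (w / a))) \<le> (1/M) * (real (4*n+2) + M * harm N)"
    by (rule mult_left_mono) (use M in simp)
  also have "\<dots> = real (4*n+2) / M + harm N" by (rule alg4) (use M in auto)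
  finally show ?thesis unfolding M_def .
qed

lemma part_fej:
  assumes a: "norm a = 1"
  shows "(1 / real (2*N+1)) * (\<Sum>w\<in>circle_grid N. norm (Fej n (w / a)))
           \<le> real (2*n+2) / real (2*N+1) + (real (2*N+1) / real (2*n+2)) * (pi^2 / 6)"
proof -
  define M where "M = real (2*N+1)"
  have M: "M > 0" unfolding M_def by simp
  define D where "D = M^2 / (4 * real (n+1))"
  have D: "D \<ge> 0" unfolding D_def by simp
  obtain u where u: "\<bar>u\<bar> \<le> 1/2" and le:
    "(\<Sum>w\<in>circle_grid N. norm (Fej n (w / a))) \<le> (\<Sum>k\<in>{-int N..int N}. norm (Fej n (cg N (of_int k - u))))"
    using grid_reduce[OF a, of "\<lambda>z. norm (Fej n z)" N] by auto
  have sb: "(\<Sum>k\<in>{-int N..int N}. norm (Fej n (cg N (of_int k - u))))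
      \<le> 2 * real (n+1) + (\<Sum>j\<in>{1..N}. D / real j ^ 2) + (\<Sum>j\<in>{1..N-1}. D / real j ^ 2)"
  proof (rule sym_bound[where psi = "\<lambda>x. norm (Fej n (cg N x))", OF _ D _ _ u])
    show "norm (Fej n (cg N x)) \<le> real (n+1)" for x
    proof -
      have g: "norm (G n (cg N x)) \<le> (1 + real n)^2" using norm_G_le[OF norm_cg] by simp
      have "norm (Fej n (cg N x)) = norm (G n (cg N x)) / (1 + real n)"
        unfolding Fej_G norm_divide norm_of_nat by simp
      also have "\<dots> \<le> (1 + real n)^2 / (1 + real n)" by (rule divide_right_mono[OF g]) simp
      also have "\<dots> = real (n+1)" by (simp add: power2_eq_square)
      finally show ?thesis .
    qed
    show "norm (Fej n (cg N x)) \<le> D / \<bar>x\<bar> ^ 2" if x: "x \<noteq> 0" "\<bar>x\<bar> \<le> real N + 1/2" for x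
    proof -
      have l: "4 * \<bar>x\<bar> / M \<le> norm (cg N x - 1)" using cg_lower[OF x(2)] unfolding M_def .
      have p: "0 < 4 * \<bar>x\<bar> / M" using x M by simp
      have l2: "(4 * \<bar>x\<bar> / M)^2 \<le> norm (cg N x - 1)^2" by (rule power_mono[OF l]) (use p in simp)
      have "(4 * \<bar>x\<bar> / M)^2 * norm (G n (cg N x)) \<le> norm (cg N x - 1)^2 * norm (G n (cg N x))"
        by (rule mult_right_mono[OF l2]) simp
      also have "\<dots> \<le> 4" by (rule norm_G_le2[OF norm_cg])
      finally have "norm (G n (cg N x)) * (4 * \<bar>x\<bar> / M)^2 \<le> 4" by (simp only: mult.commute)
      have p2: "0 < (4 * \<bar>x\<bar> / M)^2" by (rule zero_less_power[OF p])
      hence "norm (G n (cg N x)) \<le> 4 / (4 * \<bar>x\<bar> / M)^2" using pos_le_divide_eq[OF p2] \<open>norm (G n (cg N x)) * (4 * \<bar>x\<bar> / M)^2 \<le> 4\<close> by blast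
      hence "norm (G n (cg N x)) / real (n+1) \<le> 4 / (4 * \<bar>x\<bar> / M)^2 / real (n+1)"
        by (rule divide_right_mono) simp
      also have "\<dots> = D / \<bar>x\<bar> ^ 2" unfolding D_def by (rule alg1) (use x M in auto)
      finally show ?thesis unfolding Fej_G norm_divide norm_of_nat by simp
    qed
  qed auto
  have h: "(\<Sum>j\<in>{1..N}. D / real j ^ 2) \<le> D * (pi^2 / 6)"
  proof -
    have "(\<Sum>j\<in>{1..N}. D / real j ^ 2) = D * (\<Sum>j\<in>{1..N}. 1 / real j ^ 2)"
      by (simp add: sum_distrib_left)
    also have "\<dots> \<le> D * (pi^2 / 6)" by (rule mult_left_mono[OF inv_sq_bound D])
    finally show ?thesis .
  qed
  have h2: "(\<Sum>j\<in>{1..N-1}. D / real j ^ 2) \<le> (\<Sum>j\<in>{1..N}. D / real j ^ 2)"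
    by (rule sum_mono2) (use D in auto)
  have "(\<Sum>w\<in>circle_grid N. norm (Fej n (w / a))) \<le> 2 * real (n+1) + 2 * D * (pi^2 / 6)"
    using le sb h h2 by linarith
  then have "(1 / M) * (\<Sum>w\<in>circle_grid N. norm (Fej n (w / a))) \<le> (1/M) * (2 * real (n+1) + 2 * D * (pi^2 / 6))"
    by (rule mult_left_mono) (use M in simp)
  also have "\<dots> = 2 * real (n+1) / M + (M / (2 * real (n+1))) * (pi^2 / 6)"
    unfolding D_def by (rule alg2) (use M in auto)
  also have "2 * real (n+1) = real (2*n+2)" by simp
  finally show ?thesis unfolding M_def .
qed

theorem lemma5:
  fixes n N :: nat and a :: complex
  assumes "a \<in> circle"
  shows "((1 / real (2*N+1)) * (\<Sum>w\<in>circle_grid N. norm (Dir n (w / a)))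
           \<le> real (4*n+2) / real (2*N+1) + harm N) \<and>
         ((1 / real (2*N+1)) * (\<Sum>w\<in>circle_grid N. norm (Fej_plus n (w / a)))
           = (1 / real (2*N+1)) * (\<Sum>w\<in>circle_grid N. norm (Fej n (w / a)))) \<and>
         ((1 / real (2*N+1)) * (\<Sum>w\<in>circle_grid N. norm (Fej n (w / a)))
           \<le> real (2*n+2) / real (2*N+1) + (real (2*N+1) / real (2*n+2)) * (pi^2 / 6))"
proof -
  have a: "norm a = 1" using assms unfolding circle_def by simp
  have eq: "(\<Sum>w\<in>circle_grid N. norm (Fej_plus n (w / a))) = (\<Sum>w\<in>circle_grid N. norm (Fej n (w / a)))"
  proof (rule sum.cong[OF refl])
    fix w assume "w \<in> circle_grid N"
    hence "norm (w / a) = 1" using grid_norm a by (simp add: norm_divide)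
    then show "norm (Fej_plus n (w / a)) = norm (Fej n (w / a))"
      unfolding Fej_plus_def by (simp add: norm_mult norm_power)
  qed
  show ?thesis using part_dir[OF a] part_fej[OF a] eq by simp
qed

end
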